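(* Let $0<p_0,p_1,q_0,q_1\le\infty$, $s\in\mathbb R$, $t>0$ with $t>d(1/p_0-1/p_1)_+$, and let $\mathcal B=(e_{j,\lambda})$ be the canonical unit-vector basis. Then $$ \sup\big\{\sigma_n(a,\mathcal B)_{b^s_{p_1,q_1}}:\ \|a\|_{b^{s+t}_{p_0,q_0}}\le1\big\}\asymp n^{-t/d}. $$
   Context: Sequence spaces: $\nabla=(\nabla_j)_{j\ge0}$ finite subsets of $\{1,\dots,2^d-1\}\times\mathbb Z^d$ with $C_1\le2^{-jd}|\nabla_j|\le C_2$ for all $j\ge J$ (some $0<C_1\le C_2$, $J\in\mathbb N$); $b^s_{p,q}=b^s_{p,q}(\nabla)$ is the space of sequences $a=(a_{j,\lambda})$ with $\|a\|_{b^s_{p,q}}=\big(\sum_{j\ge0}2^{j(s+d(1/2-1/p))q}(\sum_{\lambda\in\nabla_j}|a_{j,\lambda}|^p)^{q/p}\big)^{1/q}<\infty$ (sup if $q=\infty$). $e_{j,\lambda}$ is the sequence with entry $1$ at position $(j,\lambda)$ and $0$ elsewhere. For a quasi-normed space $X$ and $\mathcal B=\{h_i\}\subset X$, $\sigma_n(u,\mathcal B)_X=\inf_{i_1,\dots,i_n}\inf_{c_1,\dots,c_n}\|u-\sum_{k=1}^nc_kh_{i_k}\|_X$. $\asymp$: two-sided bounds with constants independent of $n$. *)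

theory Defs
  imports "HOL-Analysis.Analysis"
begin

text \<open>Indices: a level j :: nat and a position lambda in {1..2^d-1} x Z^d,
  where Z^d is rendered as int^'d and d = CARD('d).  Exponents p, q range over (0, infinity] as ereals.\<close>

type_synonym 'd idx = "nat \<times> (int ^ 'd)"
type_synonym 'd sq = "nat \<Rightarrow> 'd idx \<Rightarrow> real"

definition inv_exp :: "ereal \<Rightarrow> real" where
  "inv_exp p = (if p = \<infinity> then 0 else 1 / real_of_ereal p)"

definition admissible_nabla :: "(nat \<Rightarrow> ('d::finite) idx set) \<Rightarrow> bool" where
  "admissible_nabla Nab \<longleftrightarrow>
     (\<forall>j. finite (Nab j) \<and> Nab j \<subseteq> {1..2 ^ CARD('d) - 1} \<times> (UNIV :: (int ^ 'd) set)) \<and>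
     (\<exists>C1 C2 J. 0 < C1 \<and> C1 \<le> C2 \<and>
        (\<forall>j\<ge>J. C1 \<le> 2 powr (- real j * CARD('d)) * real (card (Nab j))
               \<and> 2 powr (- real j * CARD('d)) * real (card (Nab j)) \<le> C2))"

definition block_norm :: "ereal \<Rightarrow> ('d::finite) idx set \<Rightarrow> ('d idx \<Rightarrow> real) \<Rightarrow> real" where
  "block_norm p A f =
     (if p = \<infinity> then (if A = {} then 0 else Max ((\<lambda>x. \<bar>f x\<bar>) ` A))
      else (\<Sum>x\<in>A. \<bar>f x\<bar> powr real_of_ereal p) powr (1 / real_of_ereal p))"

definition bnorm :: "(nat \<Rightarrow> ('d::finite) idx set) \<Rightarrow> real \<Rightarrow> ereal \<Rightarrow> ereal \<Rightarrow> 'd sq \<Rightarrow> ereal" where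
  "bnorm Nab s p q a =
     (let c = (\<lambda>j. 2 powr (real j * (s + real CARD('d) * (1/2 - inv_exp p)))
                   * block_norm p (Nab j) (a j))
      in if q = \<infinity> then (SUP j. ereal (c j))
         else if summable (\<lambda>j. c j powr real_of_ereal q)
              then ereal ((\<Sum>j. c j powr real_of_ereal q) powr (1 / real_of_ereal q))
              else \<infinity>)"

definition on_nabla :: "(nat \<Rightarrow> ('d::finite) idx set) \<Rightarrow> 'd sq \<Rightarrow> bool" where
  "on_nabla Nab a \<longleftrightarrow> (\<forall>j l. l \<notin> Nab j \<longrightarrow> a j l = 0)"

definition unit_seq :: "nat \<times> ('d::finite) idx \<Rightarrow> 'd sq" where
  "unit_seq jl = (\<lambda>j l. if (j, l) = jl then 1 else 0)"

definition sigma_n :: "(nat \<Rightarrow> ('d::finite) idx set) \<Rightarrow> real \<Rightarrow> ereal \<Rightarrow> ereal \<Rightarrow> nat \<Rightarrow> 'd sq \<Rightarrow> ereal" where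
  "sigma_n Nab s p q n u =
     (INF ic \<in> {(i, c). (\<forall>k<n. snd (i k) \<in> Nab (fst (i k)))}.
        bnorm Nab s p q (\<lambda>j l. u j l - (\<Sum>k<n. snd ic k * unit_seq (fst ic k) j l)))"

end

theory Submission
  imports Defs
begin


lemma inv_exp_inf[simp]: "inv_exp \<infinity> = 0" by (simp add: inv_exp_def)

lemma fin_exp:
  assumes "0 < p" "p \<noteq> \<infinity>"
  shows "0 < real_of_ereal p" "inv_exp p = 1 / real_of_ereal p"
  using assms by (cases p; auto simp: inv_exp_def)+

lemma inv_exp_nonneg: "0 < p \<Longrightarrow> 0 \<le> inv_exp p"
  by (cases p) (auto simp: inv_exp_def)

lemma block_norm_cong:
  "(\<And>x. x \<in> A \<Longrightarrow> f x = g x) \<Longrightarrow> block_norm p A f = block_norm p A g"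
  unfolding block_norm_def by (auto intro!: sum.cong image_cong)

lemma block_norm_nonneg:
  assumes "finite A" shows "0 \<le> block_norm p A f"
proof (cases "p = \<infinity> \<and> A \<noteq> {}")
  case True
  then obtain x where "x \<in> A" by auto
  then have "\<bar>f x\<bar> \<le> Max ((\<lambda>x. \<bar>f x\<bar>) ` A)" using assms by (intro Max_ge) auto
  then show ?thesis using True by (simp add: block_norm_def)
qed (auto simp: block_norm_def)

lemma block_norm_zero:
  "(\<And>x. x \<in> A \<Longrightarrow> f x = 0) \<Longrightarrow> block_norm p A f = 0"
proof -
  assume h: "\<And>x. x \<in> A \<Longrightarrow> f x = 0"
  have "block_norm p A f = block_norm p A (\<lambda>_. 0)" using h by (intro block_norm_cong) auto
  also have "\<dots> = 0" unfolding block_norm_def by (cases "A = {}") (auto simp: image_constant_conv)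
  finally show ?thesis .
qed

lemma block_norm_mono:
  assumes "finite A" "B \<subseteq> A" "\<And>x. x \<in> B \<Longrightarrow> \<bar>g x\<bar> \<le> \<bar>f x\<bar>" "0 < p"
  shows "block_norm p B g \<le> block_norm p A f"
proof (cases "p = \<infinity>")
  case True
  show ?thesis
  proof (cases "B = {}")
    case True
    then have "block_norm p B g = 0" by (simp add: block_norm_def)
    then show ?thesis using block_norm_nonneg[OF assms(1), of p f] by linarith
  next
    case False
    then have "A \<noteq> {}" using assms by auto
    have "Max ((\<lambda>x. \<bar>g x\<bar>) ` B) \<le> Max ((\<lambda>x. \<bar>f x\<bar>) ` A)"
    proof (subst Max_le_iff)
      show "finite ((\<lambda>x. \<bar>g x\<bar>) ` B)" using assms finite_subset by blast
      show "(\<lambda>x. \<bar>g x\<bar>) ` B \<noteq> {}" using False by auto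
      show "\<forall>a\<in>(\<lambda>x. \<bar>g x\<bar>) ` B. a \<le> Max ((\<lambda>x. \<bar>f x\<bar>) ` A)"
      proof
        fix a assume "a \<in> (\<lambda>x. \<bar>g x\<bar>) ` B"
        then obtain x where x: "x \<in> B" "a = \<bar>g x\<bar>" by auto
        have "\<bar>f x\<bar> \<le> Max ((\<lambda>x. \<bar>f x\<bar>) ` A)" using x assms by (intro Max_ge) auto
        then show "a \<le> Max ((\<lambda>x. \<bar>f x\<bar>) ` A)" using x assms(3)[of x] by linarith
      qed
    qed
    then show ?thesis using True False \<open>A \<noteq> {}\<close> by (simp add: block_norm_def)
  qed
next
  case False
  define P where "P = real_of_ereal p"
  have P: "0 < P" using fin_exp[OF assms(4) False] P_def by auto
  have "(\<Sum>x\<in>B. \<bar>g x\<bar> powr P) \<le> (\<Sum>x\<in>B. \<bar>f x\<bar> powr P)"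
    using assms P by (intro sum_mono powr_mono2) auto
  also have "\<dots> \<le> (\<Sum>x\<in>A. \<bar>f x\<bar> powr P)"
    using assms by (intro sum_mono2) auto
  finally have "(\<Sum>x\<in>B. \<bar>g x\<bar> powr P) powr (1/P) \<le> (\<Sum>x\<in>A. \<bar>f x\<bar> powr P) powr (1/P)"
    using P by (intro powr_mono2) (auto intro: sum_nonneg)
  then show ?thesis using False by (simp add: block_norm_def P_def)
qed

lemma block_norm_const:
  assumes "finite T" "T \<noteq> {}" "0 \<le> g" "0 < p"
  shows "block_norm p T (\<lambda>_. g) = real (card T) powr inv_exp p * g"
proof (cases "p = \<infinity>")
  case True
  have "(\<lambda>x. \<bar>g\<bar>) ` T = {g}" using assms by auto
  then show ?thesis using True assms by (simp add: block_norm_def)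
next
  case False
  define P where "P = real_of_ereal p"
  have P: "0 < P" "inv_exp p = 1/P" using fin_exp[OF assms(4) False] P_def by auto
  have "block_norm p T (\<lambda>_. g) = (real (card T) * g powr P) powr (1/P)"
    using False assms by (simp add: block_norm_def P_def)
  also have "\<dots> = real (card T) powr (1/P) * g"
    using P assms by (simp add: powr_mult powr_powr)
  finally show ?thesis using P by simp
qed



lemma holder_card:
  assumes "finite A" "A \<noteq> {}" "0 < p0" "0 < p1" "inv_exp p0 \<le> inv_exp p1"
  shows "block_norm p1 A f \<le> real (card A) powr (inv_exp p1 - inv_exp p0) * block_norm p0 A f"
proof (cases "p1 = \<infinity>")
  case True
  then have "inv_exp p0 = 0" using assms inv_exp_nonneg[of p0] by simp
  then have "p0 = \<infinity>" using assms fin_exp[of p0] by (cases "p0 = \<infinity>") auto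
  then show ?thesis using True \<open>inv_exp p0 = 0\<close> assms(1,2) by (simp add: card_gt_0_iff)
next
  case False
  define P1 where "P1 = real_of_ereal p1"
  have P1: "0 < P1" "inv_exp p1 = 1/P1" using fin_exp[OF assms(4) False] P1_def by auto
  have cA: "0 < real (card A)" using assms by (simp add: card_gt_0_iff)
  show ?thesis
  proof (cases "p0 = \<infinity>")
    case True
    define M where "M = Max ((\<lambda>x. \<bar>f x\<bar>) ` A)"
    have M: "\<bar>f x\<bar> \<le> M" if "x \<in> A" for x using that assms unfolding M_def by (intro Max_ge) auto
    have M0: "0 \<le> M" using M assms by (meson abs_ge_zero all_not_in_conv order_trans)
    have "(\<Sum>x\<in>A. \<bar>f x\<bar> powr P1) \<le> (\<Sum>x\<in>A. M powr P1)"
      using M P1 by (intro sum_mono powr_mono2) auto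
    also have "\<dots> = real (card A) * M powr P1" by simp
    finally have "(\<Sum>x\<in>A. \<bar>f x\<bar> powr P1) powr (1/P1) \<le> (real (card A) * M powr P1) powr (1/P1)"
      using P1 by (intro powr_mono2) (auto intro: sum_nonneg)
    also have "\<dots> = real (card A) powr (1/P1) * M"
      using P1 M0 by (simp add: powr_mult powr_powr)
    finally show ?thesis using True False P1 assms by (simp add: block_norm_def P1_def M_def)
  next
    case F0: False
    define P0 where "P0 = real_of_ereal p0"
    have P0: "0 < P0" "inv_exp p0 = 1/P0" using fin_exp[OF assms(3) F0] P0_def by auto
    have "P1 \<le> P0" using assms(5) P0 P1 by (simp add: divide_simps)
    define q where "q = P0 / P1"
    have q: "1 \<le> q" using \<open>P1 \<le> P0\<close> P1 by (simp add: q_def)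
    define B where "B = {x\<in>A. f x \<noteq> 0}"
    have fB: "finite B" "B \<subseteq> A" using assms by (auto simp: B_def)
    have S1: "(\<Sum>x\<in>A. \<bar>f x\<bar> powr P1) = (\<Sum>x\<in>B. \<bar>f x\<bar> powr P1)"
      using fB assms(1) by (intro sum.mono_neutral_right) (auto simp: B_def)
    have S0: "(\<Sum>x\<in>A. \<bar>f x\<bar> powr P0) = (\<Sum>x\<in>B. \<bar>f x\<bar> powr P0)"
      using fB assms(1) by (intro sum.mono_neutral_right) (auto simp: B_def)
    have nn: "0 \<le> block_norm p0 A f" using block_norm_nonneg[OF assms(1)] .
    show ?thesis
    proof (cases "B = {}")
      case True
      then have "block_norm p1 A f = 0" using S1 False P1 by (simp add: block_norm_def P1_def)
      then show ?thesis using nn by simp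
    next
      case Bne: False
      define nB where "nB = real (card B)"
      have nB: "0 < nB" "nB \<le> real (card A)"
        using Bne fB assms by (auto simp: nB_def card_gt_0_iff intro: card_mono)
      define z where "z = (\<lambda>x. \<bar>f x\<bar> powr P1)"
      have zq: "z x powr q = \<bar>f x\<bar> powr P0" for x
        using P1 by (simp add: z_def powr_powr q_def)
      have "(\<Sum>i\<in>B. (1/nB) *\<^sub>R z i) powr q \<le> (\<Sum>i\<in>B. (1/nB) * z i powr q)"
      proof (rule convex_on_sum[where C="{0<..}"])
        show "convex_on {0<..} (\<lambda>x. x powr q)" using powr_convex q by blast
        show "(\<Sum>i\<in>B. 1 / nB) = 1" using nB by (simp add: nB_def)
        show "\<And>i. i \<in> B \<Longrightarrow> z i \<in> {0<..}" by (auto simp: z_def B_def)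
      qed (use fB Bne nB in auto)
      then have "((\<Sum>i\<in>B. z i) / nB) powr q \<le> (\<Sum>i\<in>B. \<bar>f i\<bar> powr P0) / nB"
        by (simp add: zq sum_divide_distrib[symmetric] sum_distrib_left[symmetric] field_simps)
      then have "(\<Sum>i\<in>B. z i) powr q / nB powr q \<le> (\<Sum>i\<in>B. \<bar>f i\<bar> powr P0) / nB"
        using nB by (simp add: powr_divide z_def sum_nonneg)
      then have "(\<Sum>i\<in>B. z i) powr q \<le> nB powr q / nB * (\<Sum>i\<in>B. \<bar>f i\<bar> powr P0)"
        using nB by (simp add: field_simps)
      also have "nB powr q / nB = nB powr (q - 1)" using nB by (simp add: powr_diff)
      finally have J: "(\<Sum>i\<in>B. z i) powr q \<le> nB powr (q - 1) * (\<Sum>i\<in>B. \<bar>f i\<bar> powr P0)" .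
      have "((\<Sum>i\<in>B. z i) powr q) powr (1/P0) \<le> (nB powr (q - 1) * (\<Sum>i\<in>B. \<bar>f i\<bar> powr P0)) powr (1/P0)"
        using J P0 by (intro powr_mono2) (auto simp: z_def intro: sum_nonneg)
      also have "\<dots> = nB powr ((q - 1)/P0) * (\<Sum>i\<in>B. \<bar>f i\<bar> powr P0) powr (1/P0)"
        by (simp add: powr_mult powr_powr)
      also have "((\<Sum>i\<in>B. z i) powr q) powr (1/P0) = (\<Sum>i\<in>B. z i) powr (1/P1)"
        using P0 P1 by (simp add: powr_powr q_def)
      also have "(q - 1)/P0 = inv_exp p1 - inv_exp p0"
        using P0 P1 by (simp add: q_def field_simps)
      finally have K: "(\<Sum>i\<in>B. z i) powr (1/P1) \<le> nB powr (inv_exp p1 - inv_exp p0) * (\<Sum>i\<in>B. \<bar>f i\<bar> powr P0) powr (1/P0)" .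
      have "nB powr (inv_exp p1 - inv_exp p0) \<le> real (card A) powr (inv_exp p1 - inv_exp p0)"
        using nB assms by (intro powr_mono2) auto
      then have "nB powr (inv_exp p1 - inv_exp p0) * (\<Sum>i\<in>B. \<bar>f i\<bar> powr P0) powr (1/P0)
          \<le> real (card A) powr (inv_exp p1 - inv_exp p0) * (\<Sum>i\<in>B. \<bar>f i\<bar> powr P0) powr (1/P0)"
        by (intro mult_right_mono) auto
      with K show ?thesis using S0 S1 False F0
        by (simp add: block_norm_def P0_def P1_def z_def)
    qed
  qed
qed



lemma threshold:
  assumes "finite A" "0 < p0" "p0 \<noteq> \<infinity>" "0 < p1" "inv_exp p1 \<le> inv_exp p0"
    and "block_norm p0 A f \<le> \<alpha>" "0 < \<alpha>" "0 < N"
    and tau: "\<tau> = \<alpha> * N powr (- inv_exp p0)"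
  shows "real (card {x\<in>A. \<tau> < \<bar>f x\<bar>}) \<le> N"
    and "block_norm p1 A (\<lambda>x. if \<tau> < \<bar>f x\<bar> then 0 else f x) \<le> \<alpha> * N powr (-(inv_exp p0 - inv_exp p1))"
proof -
  define P0 where "P0 = real_of_ereal p0"
  have P0: "0 < P0" "inv_exp p0 = 1/P0" using fin_exp[OF assms(2,3)] P0_def by auto
  define SA where "SA = (\<Sum>x\<in>A. \<bar>f x\<bar> powr P0)"
  have SA0: "0 \<le> SA" unfolding SA_def by (intro sum_nonneg) auto
  have "SA powr (1/P0) \<le> \<alpha>" using assms(6) assms(3) by (simp add: block_norm_def SA_def P0_def)
  then have "(SA powr (1/P0)) powr P0 \<le> \<alpha> powr P0" using P0 SA0 by (intro powr_mono2) auto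
  then have SAle: "SA \<le> \<alpha> powr P0" using P0 SA0 by (simp add: powr_powr)
  have tpos: "0 < \<tau>" using tau assms by simp
  have "\<tau> powr P0 = \<alpha> powr P0 * N powr (-(1/P0) * P0)"
    by (simp add: tau P0(2) powr_mult powr_powr del: mult_minus_left)
  also have "-(1/P0) * P0 = -1" using P0 by simp
  finally have tP: "\<tau> powr P0 = \<alpha> powr P0 / N"
    using assms(8) by (simp add: powr_minus divide_inverse)
  define T where "T = {x\<in>A. \<tau> < \<bar>f x\<bar>}"
  have "real (card T) * \<tau> powr P0 = (\<Sum>x\<in>T. \<tau> powr P0)" by simp
  also have "\<dots> \<le> (\<Sum>x\<in>T. \<bar>f x\<bar> powr P0)"
    using P0 tpos by (intro sum_mono powr_mono2) (auto simp: T_def)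
  also have "\<dots> \<le> SA" unfolding SA_def using assms(1) by (intro sum_mono2) (auto simp: T_def)
  also have "\<dots> \<le> N * \<tau> powr P0" using SAle tP assms(8) by simp
  finally show "real (card {x\<in>A. \<tau> < \<bar>f x\<bar>}) \<le> N"
    using tpos unfolding T_def by (simp add: mult_le_cancel_right)
  define g where "g = (\<lambda>x. if \<tau> < \<bar>f x\<bar> then 0 else f x)"
  have gle: "\<bar>g x\<bar> \<le> \<tau>" for x using tpos by (auto simp: g_def)
  show "block_norm p1 A (\<lambda>x. if \<tau> < \<bar>f x\<bar> then 0 else f x) \<le> \<alpha> * N powr (-(inv_exp p0 - inv_exp p1))"
    unfolding g_def[symmetric]
  proof (cases "p1 = \<infinity>")
    case True
    show "block_norm p1 A g \<le> \<alpha> * N powr (-(inv_exp p0 - inv_exp p1))"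
    proof (cases "A = {}")
      case True
      then show ?thesis using \<open>p1 = \<infinity>\<close> assms by (simp add: block_norm_def)
    next
      case False
      have "Max ((\<lambda>x. \<bar>g x\<bar>) ` A) \<le> \<tau>" using False assms(1) gle by (subst Max_le_iff) auto
      then show ?thesis using True False by (simp add: block_norm_def tau)
    qed
  next
    case False
    define P1 where "P1 = real_of_ereal p1"
    have P1: "0 < P1" "inv_exp p1 = 1/P1" using fin_exp[OF assms(4) False] P1_def by auto
    have "P0 \<le> P1" using assms(5) P0 P1 by (simp add: divide_simps)
    have el: "\<bar>g x\<bar> powr P1 \<le> \<tau> powr (P1 - P0) * \<bar>f x\<bar> powr P0" for x
    proof (cases "\<tau> < \<bar>f x\<bar>")
      case True then show ?thesis using tpos by (simp add: g_def)
    next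
      case False
      then have "\<bar>g x\<bar> powr P1 = \<bar>f x\<bar> powr (P1 - P0) * \<bar>f x\<bar> powr P0"
        by (simp add: g_def powr_add[symmetric])
      also have "\<dots> \<le> \<tau> powr (P1 - P0) * \<bar>f x\<bar> powr P0"
        using False \<open>P0 \<le> P1\<close> by (intro mult_right_mono powr_mono2) auto
      finally show ?thesis .
    qed
    have "(\<Sum>x\<in>A. \<bar>g x\<bar> powr P1) \<le> (\<Sum>x\<in>A. \<tau> powr (P1 - P0) * \<bar>f x\<bar> powr P0)"
      by (intro sum_mono el)
    also have "\<dots> = \<tau> powr (P1 - P0) * SA" by (simp add: SA_def sum_distrib_left)
    also have "\<dots> \<le> \<tau> powr (P1 - P0) * \<alpha> powr P0" using SAle by (intro mult_left_mono) auto
    finally have "(\<Sum>x\<in>A. \<bar>g x\<bar> powr P1) powr (1/P1) \<le> (\<tau> powr (P1 - P0) * \<alpha> powr P0) powr (1/P1)"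
      using P1 by (intro powr_mono2) (auto intro: sum_nonneg)
    also have "\<dots> = \<alpha> * N powr (-(inv_exp p0 - inv_exp p1))"
    proof -
      have "(\<tau> powr (P1 - P0) * \<alpha> powr P0) powr (1/P1)
          = \<alpha> powr ((P1 - P0)/P1 + P0/P1) * N powr (- (1/P0) * ((P1 - P0)/P1))"
        using assms(7,8) by (simp add: tau powr_mult powr_powr powr_add P0(2))
      also have "(P1 - P0)/P1 + P0/P1 = 1" using P1 by (simp add: field_simps)
      also have "- (1/P0) * ((P1 - P0)/P1) = -(inv_exp p0 - inv_exp p1)"
        using P0 P1 by (simp add: field_simps)
      finally show ?thesis using assms(7) by simp
    qed
    finally show "block_norm p1 A g \<le> \<alpha> * N powr (-(inv_exp p0 - inv_exp p1))"
      using False by (simp add: block_norm_def P1_def)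
  qed
qed



definition lev :: "(nat \<Rightarrow> ('d::finite) idx set) \<Rightarrow> real \<Rightarrow> ereal \<Rightarrow> 'd sq \<Rightarrow> nat \<Rightarrow> real" where
  "lev Nab s p a j = 2 powr (real j * (s + real CARD('d) * (1/2 - inv_exp p))) * block_norm p (Nab j) (a j)"

lemma bnorm_alt: "bnorm Nab s p q a = (if q = \<infinity> then (SUP j. ereal (lev Nab s p a j))
   else if summable (\<lambda>j. lev Nab s p a j powr real_of_ereal q)
   then ereal ((\<Sum>j. lev Nab s p a j powr real_of_ereal q) powr (1 / real_of_ereal q)) else \<infinity>)"
  unfolding bnorm_def lev_def Let_def by simp

lemma lev_nonneg: "finite (Nab j) \<Longrightarrow> 0 \<le> lev Nab s p a j"
  unfolding lev_def by (intro mult_nonneg_nonneg block_norm_nonneg) auto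

lemma lev_le_bnorm:
  assumes "0 < q" "\<And>j. finite (Nab j)"
  shows "ereal (lev Nab s p a j) \<le> bnorm Nab s p q a"
proof (cases "q = \<infinity>")
  case True then show ?thesis unfolding bnorm_alt using SUP_upper[of j UNIV "\<lambda>j. ereal (lev Nab s p a j)"] by simp
next
  case False
  define Q where "Q = real_of_ereal q"
  have Q: "0 < Q" using fin_exp[OF assms(1) False] Q_def by auto
  show ?thesis
  proof (cases "summable (\<lambda>j. lev Nab s p a j powr Q)")
    case True
    have "lev Nab s p a j powr Q = (\<Sum>i\<in>{j}. lev Nab s p a i powr Q)" by simp
    also have "\<dots> \<le> (\<Sum>i. lev Nab s p a i powr Q)" by (intro sum_le_suminf True) auto
    finally have "(lev Nab s p a j powr Q) powr (1/Q) \<le> (\<Sum>i. lev Nab s p a i powr Q) powr (1/Q)"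
      using Q by (intro powr_mono2) auto
    then have "lev Nab s p a j \<le> (\<Sum>i. lev Nab s p a i powr Q) powr (1/Q)"
      using Q lev_nonneg[OF assms(2)] by (simp add: powr_powr)
    then show ?thesis using True False by (simp add: bnorm_alt Q_def)
  next
    case F: False
    then show ?thesis using False by (simp add: bnorm_alt Q_def)
  qed
qed

definition Gc :: "ereal \<Rightarrow> real \<Rightarrow> real" where
  "Gc q \<theta> = (if q = \<infinity> then 1 else (1 - \<theta> powr real_of_ereal q) powr (-1/real_of_ereal q))"

lemma Gc_pos: "0 < q \<Longrightarrow> 0 < \<theta> \<Longrightarrow> \<theta> < 1 \<Longrightarrow> 0 < Gc q \<theta>"
proof -
  assume a: "0 < q" "0 < \<theta>" "\<theta> < 1"
  show ?thesis
  proof (cases "q = \<infinity>")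
    case False
    have Q: "0 < real_of_ereal q" using fin_exp[OF a(1) False] by auto
    have "\<theta> powr real_of_ereal q < 1 powr real_of_ereal q" using a Q by (intro powr_less_mono2) auto
    then show ?thesis using False by (simp add: Gc_def)
  qed (simp add: Gc_def)
qed

lemma bnorm_le_geom:
  assumes "0 < q" "\<And>j. finite (Nab j)" "0 \<le> K" "0 < \<theta>" "\<theta> < 1"
    and b: "\<And>j. lev Nab s p a j \<le> (if j < j0 then 0 else K * \<theta> ^ (j - j0))"
  shows "bnorm Nab s p q a \<le> ereal (K * Gc q \<theta>)"
proof (cases "q = \<infinity>")
  case True
  have "lev Nab s p a j \<le> K" for j
  proof -
    have "\<theta> ^ (j - j0) \<le> 1" using assms by (intro power_le_one) auto
    then have "K * \<theta> ^ (j - j0) \<le> K" using assms(3) by (simp add: mult_left_le)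
    then show ?thesis using b[of j] assms(3) by (auto split: if_splits)
  qed
  then show ?thesis using True by (simp add: bnorm_alt Gc_def SUP_le_iff)
next
  case False
  define Q where "Q = real_of_ereal q"
  have Q: "0 < Q" using fin_exp[OF assms(1) False] Q_def by auto
  define t where "t = \<theta> powr Q"
  have t: "0 < t" "t < 1" using assms Q unfolding t_def
    by (auto intro: powr_less_mono2[of Q \<theta> 1, simplified])
  define bQ where "bQ = (\<lambda>j. if j < j0 then 0 else K powr Q * t ^ (j - j0))"
  have "(\<lambda>i. K powr Q * t ^ i) sums (K powr Q * (1 / (1 - t)))"
    using t by (intro sums_mult geometric_sums) auto
  then have "(\<lambda>i. bQ (i + j0)) sums (K powr Q * (1 / (1 - t)))" by (simp add: bQ_def)
  then have bs: "bQ sums (K powr Q * (1 / (1 - t)))" by (subst (asm) sums_zero_iff_shift) (auto simp: bQ_def)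
  have le: "lev Nab s p a j powr Q \<le> bQ j" for j
  proof (cases "j < j0")
    case True
    then have "lev Nab s p a j = 0" using b[of j] lev_nonneg[OF assms(2)] by (simp add: antisym)
    then show ?thesis using True by (simp add: bQ_def)
  next
    case F: False
    have e1: "(\<theta> ^ (j - j0)) powr Q = t ^ (j - j0)"
    proof -
      have "(\<theta> ^ (j - j0)) powr Q = (\<theta> powr real (j - j0)) powr Q"
        using powr_realpow[OF assms(4), of "j - j0"] by (simp only:)
      also have "\<dots> = (\<theta> powr Q) powr real (j - j0)"
        by (simp only: powr_powr mult.commute)
      also have "\<dots> = t ^ (j - j0)" unfolding t_def by (rule powr_realpow) (use assms(4) in simp)
      finally show ?thesis .
    qed
    have "lev Nab s p a j powr Q \<le> (K * \<theta> ^ (j - j0)) powr Q"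
      using b[of j] F Q lev_nonneg[OF assms(2)] by (intro powr_mono2) auto
    also have "\<dots> = K powr Q * t ^ (j - j0)"
      by (simp only: powr_mult e1)
    also have "\<dots> = bQ j" using F by (simp add: bQ_def)
    finally show ?thesis .
  qed
  have bsm: "summable bQ" using bs by (rule sums_summable)
  have sm: "summable (\<lambda>j. lev Nab s p a j powr Q)"
  proof (rule summable_comparison_test'[OF bsm])
    fix j :: nat
    show "norm (lev Nab s p a j powr Q) \<le> bQ j" using le[of j] by simp
  qed
  have "(\<Sum>j. lev Nab s p a j powr Q) \<le> (\<Sum>j. bQ j)"
    by (rule suminf_le[OF _ sm bsm]) (rule le)
  also have "\<dots> = K powr Q * (1 / (1 - t))" using bs by (simp add: sums_iff)
  finally have L: "(\<Sum>j. lev Nab s p a j powr Q) \<le> K powr Q * (1 / (1 - t))" .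
  have s0: "0 \<le> (\<Sum>j. lev Nab s p a j powr Q)" by (rule suminf_nonneg[OF sm]) simp
  have "(\<Sum>j. lev Nab s p a j powr Q) powr (1/Q) \<le> (K powr Q * (1 / (1 - t))) powr (1/Q)"
    using Q s0 L by (intro powr_mono2) auto
  also have "\<dots> = K * Gc q \<theta>"
  proof -
    have i: "1/(1-t) = (1-t) powr (-1)" using t by (simp add: powr_minus divide_inverse)
    have "(K powr Q * (1 / (1 - t))) powr (1/Q) = K powr (Q * (1/Q)) * (1-t) powr (-1 * (1/Q))"
      unfolding i by (simp only: powr_mult powr_powr)
    also have "\<dots> = K * (1-t) powr (-1/Q)" using Q assms(3) by simp
    also have "\<dots> = K * Gc q \<theta>" using False by (simp add: Gc_def Q_def t_def)
    finally show ?thesis .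
  qed
  finally show ?thesis using sm False by (simp add: bnorm_alt Q_def)
qed



lemma sigma_le:
  assumes "finite S" "card S \<le> n" "\<forall>x\<in>S. snd x \<in> Nab (fst x)" "l1 \<in> Nab j1"
  shows "sigma_n Nab s p q n u \<le> bnorm Nab s p q (\<lambda>j l. if (j, l) \<in> S then 0 else u j l)"
proof -
  obtain h where h: "bij_betw h {0..<card S} S" using ex_bij_betw_nat_finite[OF assms(1)] by blast
  define i where "i k = (if k < card S then h k else (j1, l1))" for k
  define c where "c k = (if k < card S then u (fst (h k)) (snd (h k)) else 0)" for k
  have hS: "h k \<in> S" if "k < card S" for k using h that by (auto simp: bij_betw_def)
  have mem: "(i, c) \<in> {(i, c). \<forall>k<n. snd (i k) \<in> Nab (fst (i k))}"
    using hS assms(3,4) by (auto simp: i_def)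
  have eq: "(\<Sum>k<n. c k * unit_seq (i k) j l) = (if (j, l) \<in> S then u j l else 0)" for j l
  proof -
    have "(\<Sum>k<n. c k * unit_seq (i k) j l) = (\<Sum>k\<in>{0..<card S}. c k * unit_seq (i k) j l)"
      using assms(2) by (intro sum.mono_neutral_right) (auto simp: c_def)
    also have "\<dots> = (\<Sum>k\<in>{0..<card S}. (\<lambda>x. u (fst x) (snd x) * unit_seq x j l) (h k))"
      by (intro sum.cong) (auto simp: c_def i_def)
    also have "\<dots> = (\<Sum>x\<in>S. u (fst x) (snd x) * unit_seq x j l)"
      using sum.reindex_bij_betw[OF h, of "\<lambda>x. u (fst x) (snd x) * unit_seq x j l"] by simp
    also have "\<dots> = (\<Sum>x\<in>S. if x = (j, l) then u j l else 0)"
      by (intro sum.cong) (auto simp: unit_seq_def)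
    also have "\<dots> = (if (j, l) \<in> S then u j l else 0)" using assms(1) by (simp add: sum.delta')
    finally show ?thesis .
  qed
  have "sigma_n Nab s p q n u \<le> bnorm Nab s p q (\<lambda>j l. u j l - (\<Sum>k<n. snd (i, c) k * unit_seq (fst (i, c) k) j l))"
    unfolding sigma_n_def by (rule INF_lower[OF mem])
  also have "(\<lambda>j l. u j l - (\<Sum>k<n. snd (i, c) k * unit_seq (fst (i, c) k) j l)) = (\<lambda>j l. if (j, l) \<in> S then 0 else u j l)"
    using eq by (auto simp: fun_eq_iff)
  finally show ?thesis .
qed

lemma sigma_ge:
  assumes "0 < q" "0 < p" "\<And>j. finite (Nab j)" "\<And>l. l \<in> Nab j \<Longrightarrow> a j l = \<gamma>" "0 \<le> \<gamma>"
    and "2 * n \<le> card (Nab j)" "1 \<le> n"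
  shows "ereal (2 powr (real j * (s + real CARD('d) * (1/2 - inv_exp p))) * (real (card (Nab j)) / 2) powr inv_exp p * \<gamma>)
     \<le> sigma_n (Nab :: nat \<Rightarrow> ('d::finite) idx set) s p q n a"
  unfolding sigma_n_def
proof (rule INF_greatest, clarify)
  fix i :: "nat \<Rightarrow> nat \<times> 'd idx" and c :: "nat \<Rightarrow> real"
  define r where "r = (\<lambda>j l. a j l - (\<Sum>k<n. snd (i, c) k * unit_seq (fst (i, c) k) j l))"
  define T where "T = {l \<in> Nab j. (j, l) \<notin> i ` {..<n}}"
  have rT: "r j l = \<gamma>" if "l \<in> T" for l
  proof -
    have "(\<Sum>k<n. snd (i, c) k * unit_seq (fst (i, c) k) j l) = 0"
      using that by (intro sum.neutral) (auto simp: T_def unit_seq_def)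
    then show ?thesis using that assms(4) by (simp add: r_def T_def)
  qed
  have sub: "Nab j \<subseteq> T \<union> {l. (j, l) \<in> i ` {..<n}}" by (auto simp: T_def)
  have "card {l. (j, l) \<in> i ` {..<n}} \<le> card (i ` {..<n})"
    by (rule card_inj_on_le[where f = "Pair j"]) (auto simp: inj_on_def)
  also have "\<dots> \<le> n" using card_image_le[of "{..<n}" i] by simp
  finally have c2: "card {l. (j, l) \<in> i ` {..<n}} \<le> n" .
  have finX: "finite {l. (j, l) \<in> i ` {..<n}}"
    using finite_vimageI[of "i ` {..<n}" "Pair j"] by (simp add: vimage_def inj_on_def)
  have "card (Nab j) \<le> card (T \<union> {l. (j, l) \<in> i ` {..<n}})"
    using sub finX by (intro card_mono) (auto simp: T_def assms(3))
  also have "\<dots> \<le> card T + card {l. (j, l) \<in> i ` {..<n}}" by (rule card_Un_le)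
  finally have cT: "card (Nab j) \<le> card T + n" using c2 by linarith
  then have cT2: "real (card (Nab j)) / 2 \<le> real (card T)" using assms(6) by linarith
  have Tne: "T \<noteq> {}" using cT assms(6,7) by auto
  have fT: "finite T" "T \<subseteq> Nab j" using assms(3) by (auto simp: T_def)
  define W where "W = 2 powr (real j * (s + real CARD('d) * (1/2 - inv_exp p)))"
  have "(real (card (Nab j)) / 2) powr inv_exp p \<le> real (card T) powr inv_exp p"
    using cT2 inv_exp_nonneg[OF assms(2)] by (intro powr_mono2) auto
  then have "W * (real (card (Nab j)) / 2) powr inv_exp p * \<gamma> \<le> W * (real (card T) powr inv_exp p * \<gamma>)"
    using assms(5) by (simp add: W_def mult_right_mono)
  also have "real (card T) powr inv_exp p * \<gamma> = block_norm p T (\<lambda>_. \<gamma>)"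
    using block_norm_const[OF fT(1) Tne assms(5,2)] by simp
  also have "block_norm p T (\<lambda>_. \<gamma>) \<le> block_norm p (Nab j) (r j)"
    using fT rT assms(3,2) by (intro block_norm_mono) auto
  finally have "W * (real (card (Nab j)) / 2) powr inv_exp p * \<gamma> \<le> lev Nab s p r j"
    by (simp add: lev_def W_def mult_left_mono)
  also have "ereal (lev Nab s p r j) \<le> bnorm Nab s p q r" by (rule lev_le_bnorm[OF assms(1,3)])
  finally show "ereal (2 powr (real j * (s + real CARD('d) * (1 / 2 - inv_exp p))) *
                 (real (card (Nab j)) / 2) powr inv_exp p * \<gamma>)
          \<le> bnorm Nab s p q (\<lambda>j l. a j l - (\<Sum>k<n. c k * unit_seq (i k) j l))"
    by (simp add: W_def r_def)
qed



lemma adm_bounds: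
  fixes Nab :: "nat \<Rightarrow> ('d::finite) idx set"
  assumes "admissible_nabla Nab"
  obtains C1 C2 J where "0 < C1" "0 < C2" "\<And>j. finite (Nab j)"
    "\<And>j. J \<le> j \<Longrightarrow> C1 * 2 powr (real j * real CARD('d)) \<le> real (card (Nab j))"
    "\<And>j. real (card (Nab j)) \<le> C2 * 2 powr (real j * real CARD('d))"
proof -
  obtain C1 C2 J where fin: "\<And>j. finite (Nab j)" and C: "0 < C1" "C1 \<le> C2"
    and b: "\<And>j. j \<ge> J \<Longrightarrow> C1 \<le> 2 powr (- real j * CARD('d)) * real (card (Nab j))
               \<and> 2 powr (- real j * CARD('d)) * real (card (Nab j)) \<le> C2"
    using assms unfolding admissible_nabla_def by blast
  define Mx where "Mx = real (\<Sum>j<J. card (Nab j))"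
  define C2' where "C2' = C2 + Mx + 1"
  have Mx0: "0 \<le> Mx" unfolding Mx_def by (rule of_nat_0_le_iff)
  have inv: "2 powr (- real j * CARD('d)) * 2 powr (real j * real CARD('d)) = 1" for j
    by (simp add: powr_add[symmetric])
  have eq: "(2 powr (- real j * CARD('d)) * x) * 2 powr (real j * real CARD('d)) = x" for j x
    using inv[of j] by (metis mult.assoc mult.commute mult_1)
  have pos: "0 < 2 powr (real j * real CARD('d))" for j by simp
  have ge1: "1 \<le> 2 powr (real j * real CARD('d))" for j by (rule ge_one_powr_ge_zero) auto
  show ?thesis
  proof (rule that[of C1 C2' J])
    show "0 < C1" "0 < C2'" using C Mx0 by (auto simp: C2'_def)
    show "finite (Nab j)" for j by (rule fin)
    show "C1 * 2 powr (real j * real CARD('d)) \<le> real (card (Nab j))" if "J \<le> j" for j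
      using mult_right_mono[OF conjunct1[OF b[OF that]] less_imp_le[OF pos[of j]]] unfolding eq .
    show "real (card (Nab j)) \<le> C2' * 2 powr (real j * real CARD('d))" for j
    proof (cases "J \<le> j")
      case True
      have "real (card (Nab j)) \<le> C2 * 2 powr (real j * real CARD('d))"
        using mult_right_mono[OF conjunct2[OF b[OF True]] less_imp_le[OF pos[of j]]] unfolding eq .
      then have "real (card (Nab j)) \<le> 2 powr (real j * real CARD('d)) * C2" by (simp add: mult.commute)
      also have "\<dots> \<le> 2 powr (real j * real CARD('d)) * C2'" using Mx0
        by (intro mult_left_mono) (auto simp: C2'_def less_imp_le[OF pos])
      finally show ?thesis by (simp add: mult.commute)
    next
      case False
      have "real (card (Nab j)) \<le> Mx" unfolding Mx_def
        using False by (simp add: member_le_sum[where i = j and A = "{..<J}", of "\<lambda>j. card (Nab j)"] del: of_nat_sum)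
      also have "\<dots> \<le> C2'" using C by (simp add: C2'_def)
      also have "\<dots> \<le> C2' * 2 powr (real j * real CARD('d))"
        using ge1[of j] C Mx0 by (simp add: C2'_def)
      finally show ?thesis .
    qed
  qed
qed


lemma lower_bound:
  fixes Nab :: "nat \<Rightarrow> ('d::finite) idx set"
  assumes adm: "admissible_nabla Nab"
    and p: "0 < p0" "0 < p1" "0 < q0" "0 < q1" and tpos: "0 < t"
  shows "\<exists>c1>0. \<forall>n::nat. n \<ge> 1 \<longrightarrow> ereal (c1 * real n powr (- t / real CARD('d)))
       \<le> (SUP a \<in> {a. on_nabla Nab a \<and> bnorm Nab (s + t) p0 q0 a \<le> 1}. sigma_n Nab s p1 q1 n a)"
proof -
  obtain C1 C2 J where C: "0 < C1" "0 < C2" and fin: "\<And>j. finite (Nab j)"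
    and lo: "\<And>j. J \<le> j \<Longrightarrow> C1 * 2 powr (real j * real CARD('d)) \<le> real (card (Nab j))"
    and hi: "\<And>j. real (card (Nab j)) \<le> C2 * 2 powr (real j * real CARD('d))"
    using adm_bounds[OF adm] by blast
  define d where "d = real CARD('d)"
  have d: "1 \<le> d" unfolding d_def by (simp add: Suc_le_eq)
  define i0 where "i0 = inv_exp p0"
  define i1 where "i1 = inv_exp p1"
  define r where "r = i0 - i1"
  define G0 where "G0 = Gc q0 (1/2)"
  have G0: "0 < G0" unfolding G0_def using p by (intro Gc_pos) auto
  define Kl where "Kl = 2 powr (real J * d) + 2 powr d * 2 / C1"
  have Kl: "0 < Kl" using C by (simp add: Kl_def add_pos_pos)
  define m where "m = min ((1/C2) powr r) ((1/C1) powr r)"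
  have m: "0 < m" using C by (simp add: m_def)
  define c1 where "c1 = Kl powr (- t / d) * m * (2 powr (- i1) / G0)"
  have c1: "0 < c1" using Kl m G0 by (simp add: c1_def)
  show ?thesis
  proof (intro exI[of _ c1] conjI c1 allI impI)
    fix n :: nat assume n: "1 \<le> n"
    have ex: "\<exists>j. J \<le> j \<and> 2 * real n \<le> C1 * 2 powr (real j * d)"
    proof -
      obtain k :: nat where k: "2 * real n / C1 < real k" using reals_Archimedean2 by blast
      define j where "j = max J k"
      have "real k \<le> real j" by (simp add: j_def)
      also have "real j \<le> 2 ^ j" using less_exp[of j] by (simp add: less_imp_le)
      also have "(2::real) ^ j = 2 powr real j" by (simp add: powr_realpow)
      also have "\<dots> \<le> 2 powr (real j * d)" using mult_left_mono[OF d, of "real j"] by (intro powr_mono) auto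
      finally have "2 * real n / C1 \<le> 2 powr (real j * d)" using k by linarith
      then have "2 * real n \<le> C1 * 2 powr (real j * d)" using C by (simp add: field_simps)
      then show ?thesis by (intro exI[of _ j]) (auto simp: j_def)
    qed
    define j where "j = (LEAST j. J \<le> j \<and> 2 * real n \<le> C1 * 2 powr (real j * d))"
    have jP: "J \<le> j" "2 * real n \<le> C1 * 2 powr (real j * d)"
      using LeastI_ex[OF ex] unfolding j_def by auto
    define E where "E = 2 powr (real j * d)"
    have Epos: "0 < E" by (simp add: E_def)
    define N where "N = real (card (Nab j))"
    have NlE: "C1 * E \<le> N" using lo[OF jP(1)] by (simp add: N_def E_def d_def)
    have NhE: "N \<le> C2 * E" using hi[of j] by (simp add: N_def E_def d_def)
    have cN: "2 * n \<le> card (Nab j)" using jP(2) NlE unfolding E_def N_def by linarith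
    have Npos: "0 < N" using cN n unfolding N_def by linarith
    have Eup: "E \<le> Kl * real n"
    proof (cases "j = J")
      case True
      have "E \<le> Kl" using C by (simp add: E_def Kl_def True)
      also have "\<dots> \<le> Kl * real n" using Kl n by simp
      finally show ?thesis .
    next
      case False
      then have jJ: "J \<le> j - 1" "j - 1 < j" using jP(1) by auto
      have "\<not> (J \<le> j - 1 \<and> 2 * real n \<le> C1 * 2 powr (real (j - 1) * d))"
        using not_less_Least[OF jJ(2)[unfolded j_def]] unfolding j_def[symmetric] by blast
      then have lt: "C1 * 2 powr (real (j - 1) * d) < 2 * real n" using jJ(1) by linarith
      have "E = 2 powr d * 2 powr (real (j - 1) * d)"
        using jJ by (simp add: E_def powr_add[symmetric] of_nat_diff algebra_simps)
      also have "\<dots> \<le> 2 powr d * (2 * real n / C1)" using lt C by (intro mult_left_mono) (auto simp: field_simps)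
      also have "\<dots> \<le> Kl * real n" using n C by (simp add: Kl_def field_simps)
      finally show ?thesis .
    qed
    define A0 where "A0 = (s + t) + real CARD('d) * (1/2 - inv_exp p0)"
    define A1 where "A1 = s + real CARD('d) * (1/2 - inv_exp p1)"
    define \<gamma> where "\<gamma> = 2 powr (-(real j * A0)) * N powr (- i0) / G0"
    have \<gamma>: "0 \<le> \<gamma>" using G0 by (simp add: \<gamma>_def)
    define a :: "'d sq" where "a = (\<lambda>j' l. if j' = j \<and> l \<in> Nab j then \<gamma> else 0)"
    have Nne: "Nab j \<noteq> {}" using Npos unfolding N_def by auto
    have ona: "on_nabla Nab a" by (simp add: on_nabla_def a_def)
    have levb: "lev Nab (s + t) p0 a j' \<le> (if j' < j then 0 else (1/G0) * (1/2) ^ (j' - j))" for j'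
    proof (cases "j' = j")
      case True
      have "block_norm p0 (Nab j) (a j) = block_norm p0 (Nab j) (\<lambda>_. \<gamma>)"
        by (intro block_norm_cong) (simp add: a_def)
      also have "\<dots> = N powr i0 * \<gamma>" using block_norm_const[OF fin Nne \<gamma> p(1)] by (simp add: N_def i0_def)
      finally have "lev Nab (s + t) p0 a j = 2 powr (real j * A0) * (N powr i0 * \<gamma>)"
        by (simp add: lev_def A0_def)
      also have "\<dots> = (2 powr (real j * A0) * 2 powr (-(real j * A0))) * (N powr i0 * N powr (- i0)) / G0"
        by (simp add: \<gamma>_def)
      also have "\<dots> = 1 / G0" using Npos by (simp add: powr_add[symmetric])
      finally show ?thesis using True by simp
    next
      case False
      have "block_norm p0 (Nab j') (a j') = 0" using False by (intro block_norm_zero) (simp add: a_def)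
      then have "lev Nab (s + t) p0 a j' = 0" by (simp add: lev_def)
      then show ?thesis using G0 by simp
    qed
    have "bnorm Nab (s + t) p0 q0 a \<le> ereal ((1/G0) * Gc q0 (1/2))"
      by (rule bnorm_le_geom[OF p(3) fin _ _ _ levb]) (use G0 in auto)
    then have bn: "bnorm Nab (s + t) p0 q0 a \<le> 1" using G0 by (simp add: G0_def one_ereal_def)
    have sg: "ereal (2 powr (real j * A1) * (N / 2) powr i1 * \<gamma>) \<le> sigma_n Nab s p1 q1 n a"
      using sigma_ge[where Nab = Nab and j = j and a = a and s = s and \<gamma> = \<gamma> and n = n and p = p1 and q = q1, OF p(4) p(2) fin _ \<gamma> cN n] by (simp add: a_def A1_def N_def i1_def)
    have Veq: "2 powr (real j * A1) * (N / 2) powr i1 * \<gamma>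
        = 2 powr (-(real j * t)) * (E / N) powr r * (2 powr (- i1) / G0)"
    proof -
      have e1: "2 powr (real j * A1) * 2 powr (-(real j * A0)) = 2 powr (-(real j * t)) * 2 powr (real j * d * r)"
        unfolding powr_add[symmetric] by (rule arg_cong[where f = "\<lambda>x. 2 powr x"])
          (simp add: A0_def A1_def r_def i0_def i1_def d_def algebra_simps)
      have e2: "(N / 2) powr i1 = N powr i1 * 2 powr (- i1)"
      proof -
        have "(N / 2) powr i1 = N powr i1 / 2 powr i1" by (rule powr_divide)
        moreover have "2 powr (- i1) = 1 / 2 powr i1" by (rule powr_minus_divide)
        ultimately show ?thesis by simp
      qed
      have e3: "(E / N) powr r = 2 powr (real j * d * r) * N powr (- r)"
      proof -
        have "(E / N) powr r = E powr r / N powr r" by (rule powr_divide)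
        moreover have "N powr (- r) = 1 / N powr r" by (rule powr_minus_divide)
        moreover have "E powr r = 2 powr (real j * d * r)" unfolding E_def by (rule powr_powr)
        ultimately show ?thesis by simp
      qed
      have e4: "N powr i1 * N powr (- i0) = N powr (- r)" by (simp add: r_def powr_add[symmetric])
      have "2 powr (real j * A1) * (N / 2) powr i1 * \<gamma>
          = (2 powr (real j * A1) * 2 powr (-(real j * A0))) * (N powr i1 * N powr (- i0)) * (2 powr (- i1) / G0)"
        by (simp add: e2 \<gamma>_def)
      also have "\<dots> = (2 powr (-(real j * t)) * 2 powr (real j * d * r)) * N powr (- r) * (2 powr (- i1) / G0)"
        unfolding e1 e4 ..
      also have "\<dots> = 2 powr (-(real j * t)) * (E / N) powr r * (2 powr (- i1) / G0)"
        unfolding e3 by (simp only: mult_ac)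
      finally show ?thesis .
    qed
    have t1: "Kl powr (- t / d) * real n powr (- t / d) \<le> 2 powr (-(real j * t))"
    proof -
      have "Kl powr (- t / d) * real n powr (- t / d) = (Kl * real n) powr (- t / d)" by (simp add: powr_mult)
      also have "\<dots> \<le> E powr (- t / d)" using tpos d Epos Eup by (intro powr_mono2') (auto simp: divide_nonneg_pos)
      also have "\<dots> = 2 powr (-(real j * t))" using d by (simp add: E_def powr_powr)
      finally show ?thesis .
    qed
    have t2: "m \<le> (E / N) powr r"
    proof (cases "0 \<le> r")
      case True
      have "1 / C2 \<le> E / N" using NhE C Npos Epos by (simp add: field_simps)
      then have "(1/C2) powr r \<le> (E / N) powr r" using True C by (intro powr_mono2) auto
      then show ?thesis by (simp add: m_def)
    next
      case False
      have "E / N \<le> 1 / C1" using NlE C Npos Epos by (simp add: field_simps)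
      then have "(1/C1) powr r \<le> (E / N) powr r" using False Npos Epos by (intro powr_mono2') auto
      then show ?thesis by (simp add: m_def)
    qed
    have "c1 * real n powr (- t / d) = (Kl powr (- t / d) * real n powr (- t / d)) * m * (2 powr (- i1) / G0)"
      by (simp add: c1_def mult_ac)
    also have "\<dots> \<le> 2 powr (-(real j * t)) * (E / N) powr r * (2 powr (- i1) / G0)"
      using t1 t2 m G0 by (intro mult_right_mono mult_mono) auto
    finally have "ereal (c1 * real n powr (- t / d)) \<le> sigma_n Nab s p1 q1 n a"
      using sg Veq by (metis ereal_less_eq(3) order_trans)
    then show "ereal (c1 * real n powr (- t / real CARD('d)))
       \<le> (SUP a \<in> {a. on_nabla Nab a \<and> bnorm Nab (s + t) p0 q0 a \<le> 1}. sigma_n Nab s p1 q1 n a)"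
      using ona bn unfolding d_def by (intro SUP_upper2[of a]) auto
  qed
qed



lemma geom_pow_sum:
  assumes "2 \<le> (x::real)" shows "(\<Sum>j<m. x ^ j) \<le> x ^ m"
proof (induction m)
  case (Suc m)
  have "(\<Sum>j<Suc m. x ^ j) = (\<Sum>j<m. x ^ j) + x ^ m" by simp
  also have "\<dots> \<le> x ^ m + x ^ m" using Suc by simp
  also have "\<dots> \<le> x * x ^ m" using assms by (simp add: mult_right_mono[of 2 x "x ^ m"] )
  finally show ?case by simp
qed simp

lemma geom_powr_sum:
  assumes "1 \<le> (d::real)" shows "(\<Sum>j<m. 2 powr (real j * d)) \<le> 2 powr (real m * d)"
proof -
  have e: "2 powr (real k * d) = (2 powr d) ^ k" for k
  proof -
    have "(2 powr d) ^ k = (2 powr d) powr real k" by (rule powr_realpow[symmetric]) simp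
    also have "\<dots> = 2 powr (real k * d)" by (simp only: powr_powr mult.commute)
    finally show ?thesis by simp
  qed
  have "2 \<le> 2 powr d" using powr_mono[OF assms, of 2] by simp
  then show ?thesis unfolding e by (rule geom_pow_sum)
qed

lemma choose_j0:
  assumes "0 < Ch" "1 \<le> n" "1 \<le> (d::real)"
  shows "\<exists>j0::nat. (0 < j0 \<longrightarrow> 2 * Ch * 2 powr (real j0 * d) \<le> real n)
              \<and> real n < 2 * Ch * 2 powr d * 2 powr (real j0 * d)"
proof -
  have ex: "\<exists>j::nat. real n < 2 * Ch * 2 powr (real (Suc j) * d)"
  proof -
    obtain k :: nat where k: "real n / (2 * Ch) < real k" using reals_Archimedean2 by blast
    have "real k \<le> 2 ^ k" using less_exp[of k] by (simp add: less_imp_le)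
    also have "(2::real) ^ k = 2 powr real k" by (simp add: powr_realpow)
    also have "\<dots> \<le> 2 powr (real (Suc k) * d)"
    proof (rule powr_mono)
      have "real (Suc k) * 1 \<le> real (Suc k) * d" by (rule mult_left_mono[OF assms(3)]) simp
      moreover have "real k \<le> real (Suc k) * 1" by simp
      ultimately show "real k \<le> real (Suc k) * d" by linarith
    qed simp
    finally have "real n / (2 * Ch) < 2 powr (real (Suc k) * d)" using k by linarith
    then show ?thesis using assms(1) by (intro exI[of _ k]) (simp add: field_simps)
  qed
  define j0 where "j0 = (LEAST j. real n < 2 * Ch * 2 powr (real (Suc j) * d))"
  have h1: "real n < 2 * Ch * 2 powr (real (Suc j0) * d)" unfolding j0_def by (rule LeastI_ex[OF ex])
  have "2 powr (real (Suc j0) * d) = 2 powr d * 2 powr (real j0 * d)"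
    by (simp add: powr_add[symmetric] algebra_simps)
  then have h1': "real n < 2 * Ch * 2 powr d * 2 powr (real j0 * d)" using h1 by simp
  have h2: "2 * Ch * 2 powr (real j0 * d) \<le> real n" if "0 < j0"
  proof -
    have "j0 - 1 < j0" using that by simp
    then have "\<not> real n < 2 * Ch * 2 powr (real (Suc (j0 - 1)) * d)"
      using not_less_Least unfolding j0_def by blast
    then show ?thesis using that by simp
  qed
  show ?thesis using h1' h2 by blast
qed

lemma level_from_norm:
  fixes Nab :: "nat \<Rightarrow> ('d::finite) idx set"
  assumes "0 < q0" "\<And>j. finite (Nab j)" "bnorm Nab (s + t) p0 q0 a \<le> 1"
  shows "block_norm p0 (Nab j) (a j) \<le> 2 powr (-(real j * ((s + t) + real CARD('d) * (1/2 - inv_exp p0))))"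
proof -
  define W where "W = 2 powr (real j * ((s + t) + real CARD('d) * (1/2 - inv_exp p0)))"
  define b where "b = block_norm p0 (Nab j) (a j)"
  have W: "0 < W" by (simp add: W_def)
  have "ereal (lev Nab (s + t) p0 a j) \<le> 1" by (rule order_trans[OF lev_le_bnorm[OF assms(1,2)] assms(3)])
  then have "lev Nab (s + t) p0 a j \<le> 1" by (simp add: one_ereal_def)
  then have "W * b \<le> 1" unfolding lev_def W_def b_def .
  then have "b * W \<le> 1" by (simp only: mult.commute)
  then have "b \<le> 1 / W" using W by (simp only: pos_le_divide_eq)
  then show ?thesis unfolding b_def W_def by (simp only: powr_minus_divide)
qed



lemma pow2_powr: "(2 powr x) ^ k = 2 powr (x * real k)"
proof -
  have "(2 powr x) ^ k = (2 powr x) powr real k" by (rule powr_realpow[symmetric]) simp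
  also have "\<dots> = 2 powr (x * real k)" by (rule powr_powr)
  finally show ?thesis .
qed

lemma shift2:
  assumes "j0 \<le> j"
  shows "2 powr (-(real j * t)) = 2 powr (-(real j0 * t)) * (2 powr (-t)) ^ (j - j0)"
proof -
  have "2 powr (-(real j0 * t)) * (2 powr (-t)) ^ (j - j0) = 2 powr (-(real j0 * t) + (-t) * real (j - j0))"
    by (simp only: pow2_powr powr_add)
  also have "-(real j0 * t) + (-t) * real (j - j0) = -(real j * t)"
    using assms by (simp add: of_nat_diff algebra_simps)
  finally show ?thesis by simp
qed

lemma upper_bound:
  fixes Nab :: "nat \<Rightarrow> ('d::finite) idx set"
  assumes adm: "admissible_nabla Nab"
    and p: "0 < p0" "0 < p1" "0 < q0" "0 < q1" and tpos: "0 < t"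
    and tc: "t > real CARD('d) * max 0 (inv_exp p0 - inv_exp p1)"
  shows "\<exists>c2>0. \<forall>n::nat. n \<ge> 1 \<longrightarrow>
     (SUP a \<in> {a. on_nabla Nab a \<and> bnorm Nab (s + t) p0 q0 a \<le> 1}. sigma_n Nab s p1 q1 n a)
       \<le> ereal (c2 * real n powr (- t / real CARD('d)))"
proof -
  obtain C1 Ch J where C: "0 < C1" "0 < Ch" and fin: "\<And>j. finite (Nab j)"
    and lo: "\<And>j. J \<le> j \<Longrightarrow> C1 * 2 powr (real j * real CARD('d)) \<le> real (card (Nab j))"
    and hi: "\<And>j. real (card (Nab j)) \<le> Ch * 2 powr (real j * real CARD('d))"
    using adm_bounds[OF adm] by blast
  define d where "d = real CARD('d)"
  have d: "1 \<le> d" unfolding d_def by (simp add: Suc_le_eq)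
  define i0 where "i0 = inv_exp p0"
  define i1 where "i1 = inv_exp p1"
  define r where "r = i0 - i1"
  have i0: "0 \<le> i0" "0 \<le> i1" using inv_exp_nonneg p unfolding i0_def i1_def by auto
  have "0 < C1 * 2 powr (real J * real CARD('d))" using C by simp
  then have "0 < real (card (Nab J))" using lo[of J] by linarith
  then have "Nab J \<noteq> {}" by auto
  then obtain l1 where l1: "l1 \<in> Nab J" by blast
  define A0 where "A0 = (s + t) + real CARD('d) * (1/2 - inv_exp p0)"
  define A1 where "A1 = s + real CARD('d) * (1/2 - inv_exp p1)"
  have WA: "2 powr (real j * A1) * 2 powr (-(real j * A0)) = 2 powr (-(real j * t)) * 2 powr (real j * d * r)" for j
    unfolding powr_add[symmetric] by (rule arg_cong[where f = "\<lambda>x. 2 powr x"])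
      (simp add: A0_def A1_def r_def i0_def i1_def d_def algebra_simps)
  have alpha: "block_norm p0 (Nab j) (a j) \<le> 2 powr (-(real j * A0))"
    if "bnorm Nab (s + t) p0 q0 a \<le> 1" for a j
    using level_from_norm[OF p(3) fin that] by (simp add: A0_def)
  define Q1 where "Q1 = 1 + 1 / (2 * Ch)"
  have Q1: "1 \<le> Q1" using C by (simp add: Q1_def)
  define Kt where "Kt = (2 * Ch * 2 powr d) powr (t / d)"
  have Kt: "0 < Kt" using C by (simp add: Kt_def)
  have j0facts: "\<exists>j0. real (\<Sum>j<j0. card (Nab j)) \<le> real n / 2 \<and> 2 powr (real j0 * d) \<le> real n * Q1
      \<and> 2 powr (-(real j0 * t)) \<le> Kt * real n powr (- t / d)" if n: "1 \<le> n" for n :: nat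
  proof -
    obtain j0 where h2: "0 < j0 \<Longrightarrow> 2 * Ch * 2 powr (real j0 * d) \<le> real n"
      and h1: "real n < 2 * Ch * 2 powr d * 2 powr (real j0 * d)"
      using choose_j0[OF C(2) n d] by blast
    define E where "E = 2 powr (real j0 * d)"
    have Epos: "0 < E" by (simp add: E_def)
    have s1: "real (\<Sum>j<j0. card (Nab j)) \<le> real n / 2"
    proof (cases "j0 = 0")
      case False
      have "real (\<Sum>j<j0. card (Nab j)) = (\<Sum>j<j0. real (card (Nab j)))" by simp
      also have "\<dots> \<le> (\<Sum>j<j0. Ch * 2 powr (real j * d))" by (intro sum_mono) (simp add: hi d_def)
      also have "\<dots> = Ch * (\<Sum>j<j0. 2 powr (real j * d))" by (simp add: sum_distrib_left)
      also have "\<dots> \<le> Ch * E" unfolding E_def using geom_powr_sum[OF d] C by (intro mult_left_mono) auto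
      also have "\<dots> \<le> real n / 2" using h2 False by (simp add: E_def)
      finally show ?thesis .
    qed simp
    have s2: "E \<le> real n * Q1"
    proof (cases "j0 = 0")
      case True
      then show ?thesis using n Q1 
      proof -
        have "real n * 1 \<le> real n * Q1" by (rule mult_left_mono[OF Q1]) simp
        moreover have "1 \<le> real n" using n by simp
        ultimately have "1 \<le> real n * Q1" by linarith
        then show ?thesis using True by (simp add: E_def)
      qed
    next
      case False
      have "E \<le> real n / (2 * Ch)" using h2 False C by (simp add: E_def field_simps)
      also have "\<dots> \<le> real n * Q1" using C n by (simp add: Q1_def field_simps)
      finally show ?thesis .
    qed
    have s3: "2 powr (-(real j0 * t)) \<le> Kt * real n powr (- t / d)"
    proof -
      have "2 powr (-(real j0 * t)) = E powr (- t / d)" using d by (simp add: E_def powr_powr)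
      also have "\<dots> \<le> (real n / (2 * Ch * 2 powr d)) powr (- t / d)"
        using h1 C n tpos d by (intro powr_mono2') (auto simp: field_simps E_def)
      also have "\<dots> = real n powr (- t / d) / (2 * Ch * 2 powr d) powr (- t / d)" by (rule powr_divide)
      also have "\<dots> = Kt * real n powr (- t / d)"
      proof -
        have "(2 * Ch * 2 powr d) powr (- t / d) = 1 / Kt"
          unfolding Kt_def by (simp only: minus_divide_left[symmetric] powr_minus_divide)
        then show ?thesis using Kt by simp
      qed
      finally show ?thesis .
    qed
    show ?thesis using s1 s2 s3 unfolding E_def by blast
  qed
  show ?thesis
  proof (cases "r \<le> 0")
    case True
    define \<theta> where "\<theta> = 2 powr (-t)"
    have \<theta>: "0 < \<theta>" "\<theta> < 1" using tpos
      by (auto simp: \<theta>_def intro: powr_less_mono[of "-t" 0 2, simplified])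
    define c2 where "c2 = Ch powr (-r) * Kt * Gc q1 \<theta>"
    have G1: "0 < Gc q1 \<theta>" by (rule Gc_pos[OF p(4) \<theta>])
    have c2: "0 < c2" using C Kt G1 by (simp add: c2_def)
    show ?thesis
    proof (intro exI[of _ c2] conjI c2 allI impI)
      fix n :: nat assume n: "1 \<le> n"
      obtain j0 where j0s: "real (\<Sum>j<j0. card (Nab j)) \<le> real n / 2"
        and j0k: "2 powr (-(real j0 * t)) \<le> Kt * real n powr (- t / d)"
        using j0facts[OF n] by blast
      show "(SUP a \<in> {a. on_nabla Nab a \<and> bnorm Nab (s + t) p0 q0 a \<le> 1}. sigma_n Nab s p1 q1 n a)
          \<le> ereal (c2 * real n powr (- t / real CARD('d)))"
      proof (rule SUP_least, clarify)
        fix a assume ona: "on_nabla Nab a" and an: "bnorm Nab (s + t) p0 q0 a \<le> 1"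
        define S where "S = Sigma {..<j0} Nab"
        have fS: "finite S" unfolding S_def using fin by auto
        have "card S = (\<Sum>j<j0. card (Nab j))" unfolding S_def using fin by (simp add: card_SigmaI)
        then have "real (card S) \<le> real n" using j0s n by simp
        then have cS: "card S \<le> n" by simp
        have vS: "\<forall>x\<in>S. snd x \<in> Nab (fst x)" by (auto simp: S_def)
        define u where "u = (\<lambda>j l. if (j, l) \<in> S then 0 else a j l)"
        have sig: "sigma_n Nab s p1 q1 n a \<le> bnorm Nab s p1 q1 u"
          using sigma_le[OF fS cS vS l1] unfolding u_def .
        define K where "K = Ch powr (-r) * 2 powr (-(real j0 * t))"
        have K0: "0 \<le> K" by (simp add: K_def)
        have levu: "lev Nab s p1 u j \<le> (if j < j0 then 0 else K * \<theta> ^ (j - j0))" for j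
        proof (cases "j < j0")
          case True
          have "block_norm p1 (Nab j) (u j) = 0" using True by (intro block_norm_zero) (simp add: u_def S_def)
          then show ?thesis using True by (simp add: lev_def)
        next
          case False
          have uj: "u j = a j" using False by (auto simp: u_def S_def fun_eq_iff)
          have b0: "block_norm p0 (Nab j) (a j) \<le> 2 powr (-(real j * A0))" by (rule alpha[OF an])
          define N where "N = real (card (Nab j))"
          have bn1: "block_norm p1 (Nab j) (a j) \<le> (Ch powr (-r) * 2 powr (-(real j * d * r))) * 2 powr (-(real j * A0))"
          proof (cases "Nab j = {}")
            case True
            then have "block_norm p1 (Nab j) (a j) = 0" by (intro block_norm_zero) auto
            then show ?thesis by simp
          next
            case ne: False
            have Npos: "0 < N" using ne fin by (simp add: N_def card_gt_0_iff)
            have Nb: "N powr (i1 - i0) \<le> Ch powr (-r) * 2 powr (-(real j * d * r))"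
            proof -
              have "N powr (i1 - i0) \<le> (Ch * 2 powr (real j * d)) powr (i1 - i0)"
                using hi[of j] Npos True by (intro powr_mono2) (auto simp: N_def d_def r_def)
              also have "\<dots> = Ch powr (i1 - i0) * 2 powr (real j * d * (i1 - i0))"
                by (simp add: powr_mult powr_powr)
              also have "i1 - i0 = -r" by (simp add: r_def)
              also have "real j * d * (- r) = -(real j * d * r)" by simp
              finally show ?thesis by (simp add: r_def)
            qed
            have "block_norm p1 (Nab j) (a j) \<le> N powr (i1 - i0) * block_norm p0 (Nab j) (a j)"
              using holder_card[OF fin ne p(1) p(2)] True by (simp add: N_def i0_def i1_def r_def)
            also have "\<dots> \<le> N powr (i1 - i0) * 2 powr (-(real j * A0))" using b0 by (intro mult_left_mono) auto
            also have "\<dots> \<le> (Ch powr (-r) * 2 powr (-(real j * d * r))) * 2 powr (-(real j * A0))"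
              using Nb by (intro mult_right_mono) auto
            finally show ?thesis .
          qed
          have YZ: "2 powr (real j * (d * r)) * 2 powr (-(real j * (d * r))) = 1" by (simp add: powr_add[symmetric])
          have "lev Nab s p1 u j = 2 powr (real j * A1) * block_norm p1 (Nab j) (a j)"
            by (simp add: lev_def uj A1_def)
          also have "\<dots> \<le> 2 powr (real j * A1) * ((Ch powr (-r) * 2 powr (-(real j * d * r))) * 2 powr (-(real j * A0)))"
            using bn1 by (intro mult_left_mono) auto
          also have "\<dots> = Ch powr (-r) * ((2 powr (real j * A1) * 2 powr (-(real j * A0))) * 2 powr (-(real j * d * r)))"
            by (simp only: mult_ac)
          also have "\<dots> = Ch powr (-r) * 2 powr (-(real j * t))"
            unfolding WA mult.assoc YZ mult_1_right ..
          also have "\<dots> = K * \<theta> ^ (j - j0)"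
            using shift2[of j0 j t] False by (simp add: K_def \<theta>_def mult.assoc)
          finally show ?thesis using False by simp
        qed
        have "bnorm Nab s p1 q1 u \<le> ereal (K * Gc q1 \<theta>)"
          by (rule bnorm_le_geom[OF p(4) fin K0 \<theta> levu])
        also have "K * Gc q1 \<theta> \<le> c2 * real n powr (- t / real CARD('d))"
        proof -
          have "K \<le> Ch powr (-r) * (Kt * real n powr (- t / d))"
            unfolding K_def using j0k by (intro mult_left_mono) auto
          then have "K * Gc q1 \<theta> \<le> Ch powr (-r) * (Kt * real n powr (- t / d)) * Gc q1 \<theta>"
            using G1 by (intro mult_right_mono) auto
          then show ?thesis by (simp add: c2_def d_def mult_ac)
        qed
        finally show "sigma_n Nab s p1 q1 n a \<le> ereal (c2 * real n powr (- t / real CARD('d)))"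
          using sig by (rule order_trans[rotated]) simp
      qed
    qed
  next
    case False
    then have rpos: "0 < r" by simp
    have i0pos: "0 < i0" using rpos i0 by (simp add: r_def)
    have p0fin: "p0 \<noteq> \<infinity>" using i0pos by (auto simp: i0_def)
    have i10: "inv_exp p1 \<le> inv_exp p0" using rpos by (simp add: r_def i0_def i1_def)
    have tdr: "d * r < t" using tc rpos by (simp add: d_def r_def i0_def i1_def)
    define \<kappa> where "\<kappa> = (t - d * r) / (2 * r)"
    define \<mu> where "\<mu> = (t - d * r) / 2"
    have \<kappa>: "0 < \<kappa>" using tdr rpos by (simp add: \<kappa>_def)
    have \<mu>: "0 < \<mu>" using tdr by (simp add: \<mu>_def)
    have \<kappa>r: "\<kappa> * r = \<mu>" using rpos by (simp add: \<kappa>_def \<mu>_def field_simps)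
    define \<theta>k where "\<theta>k = 2 powr (-\<kappa>)"
    have \<theta>k: "0 < \<theta>k" "\<theta>k < 1" using \<kappa>
      by (auto simp: \<theta>k_def intro: powr_less_mono[of "-\<kappa>" 0 2, simplified])
    define \<theta> where "\<theta> = 2 powr (-\<mu>)"
    have \<theta>: "0 < \<theta>" "\<theta> < 1" using \<mu>
      by (auto simp: \<theta>_def intro: powr_less_mono[of "-\<mu>" 0 2, simplified])
    define c2 where "c2 = (2 * Q1 / (1 - \<theta>k)) powr r * Kt * Gc q1 \<theta>"
    have G1: "0 < Gc q1 \<theta>" by (rule Gc_pos[OF p(4) \<theta>])
    have c2: "0 < c2" using Q1 \<theta>k Kt G1 by (simp add: c2_def)
    show ?thesis
    proof (intro exI[of _ c2] conjI c2 allI impI)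
      fix n :: nat assume n: "1 \<le> n"
      obtain j0 where j0s: "real (\<Sum>j<j0. card (Nab j)) \<le> real n / 2"
        and j0E: "2 powr (real j0 * d) \<le> real n * Q1"
        and j0k: "2 powr (-(real j0 * t)) \<le> Kt * real n powr (- t / d)"
        using j0facts[OF n] by blast
      define M where "M = (1 - \<theta>k) * real n / 2"
      have M: "0 < M" using \<theta>k n by (simp add: M_def)
      define Nj where "Nj j = M * \<theta>k ^ (j - j0)" for j
      have Nj: "0 < Nj j" for j using M \<theta>k by (simp add: Nj_def)
      define \<alpha> where "\<alpha> j = 2 powr (-(real j * A0))" for j
      have \<alpha>: "0 < \<alpha> j" for j by (simp add: \<alpha>_def)
      define \<tau> where "\<tau> j = \<alpha> j * Nj j powr (- inv_exp p0)" for j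
      show "(SUP a \<in> {a. on_nabla Nab a \<and> bnorm Nab (s + t) p0 q0 a \<le> 1}. sigma_n Nab s p1 q1 n a)
          \<le> ereal (c2 * real n powr (- t / real CARD('d)))"
      proof (rule SUP_least, clarify)
        fix a assume ona: "on_nabla Nab a" and an: "bnorm Nab (s + t) p0 q0 a \<le> 1"
        define T where "T j = {l \<in> Nab j. \<tau> j < \<bar>a j l\<bar>}" for j
        have cardT: "real (card (T j)) \<le> Nj j" for j
          unfolding T_def using threshold(1)[OF fin p(1) p0fin p(2) i10 _ \<alpha> Nj \<tau>_def] alpha[OF an]
          by (simp add: \<alpha>_def)
        have resid: "block_norm p1 (Nab j) (\<lambda>l. if \<tau> j < \<bar>a j l\<bar> then 0 else a j l) \<le> \<alpha> j * Nj j powr (- r)" for j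
          using threshold(2)[OF fin p(1) p0fin p(2) i10 _ \<alpha> Nj \<tau>_def] alpha[OF an]
          by (simp add: \<alpha>_def r_def i0_def i1_def)
        obtain i where i: "\<theta>k ^ i < 1 / M" using real_arch_pow_inv[of "1/M" \<theta>k] M \<theta>k by auto
        define j1 where "j1 = j0 + i"
        have Tempty: "T j = {}" if "j1 \<le> j" for j
        proof -
          have "\<theta>k ^ (j - j0) \<le> \<theta>k ^ i" using that \<theta>k by (intro power_decreasing) (auto simp: j1_def)
          then have "Nj j \<le> M * \<theta>k ^ i" using M by (simp add: Nj_def)
          also have "\<dots> < M * (1 / M)" using i M by (intro mult_strict_left_mono) auto
          finally have "real (card (T j)) < 1" using cardT[of j] M by simp
          then have "card (T j) = 0" by simp
          moreover have "finite (T j)" using fin by (simp add: T_def)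
          ultimately show ?thesis by simp
        qed
        define S where "S = {(j, l). l \<in> Nab j \<and> (j < j0 \<or> (j0 \<le> j \<and> \<tau> j < \<bar>a j l\<bar>))}"
        define B where "B j = (if j < j0 then Nab j else T j)" for j
        have SB: "S = Sigma {..<j1} B"
        proof (intro equalityI subsetI)
          fix x assume x: "x \<in> S"
          obtain j l where jl: "x = (j, l)" by (cases x) blast
          show "x \<in> Sigma {..<j1} B"
          proof (cases "j < j0")
            case True then show ?thesis using x jl by (auto simp: S_def B_def j1_def)
          next
            case F: False
            have lT: "l \<in> T j" using x jl F by (auto simp: S_def T_def)
            then have "j < j1" using Tempty[of j] by (cases "j1 \<le> j") auto
            then show ?thesis using lT F jl by (auto simp: B_def)
          qed
        next
          fix x assume "x \<in> Sigma {..<j1} B"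
          then show "x \<in> S" by (auto simp: S_def B_def T_def split: if_splits)
        qed
        have fB: "finite (B j)" for j using fin by (simp add: B_def T_def)
        have fS: "finite S" unfolding SB using fB by auto
        have "card S = (\<Sum>j<j1. card (B j))" unfolding SB using fB by (simp add: card_SigmaI)
        define h1 where "h1 j = (if j < j0 then real (card (Nab j)) else 0)" for j
        define h2 where "h2 j = (if j < j0 then 0 else Nj j)" for j
        have "real (card S) = (\<Sum>j<j1. real (card (B j)))" using \<open>card S = _\<close> by simp
        also have "\<dots> \<le> (\<Sum>j<j1. h1 j + h2 j)"
          using cardT by (intro sum_mono) (simp add: B_def h1_def h2_def)
        also have "\<dots> = (\<Sum>j<j1. h1 j) + (\<Sum>j<j1. h2 j)" by (rule sum.distrib)
        also have "(\<Sum>j<j1. h1 j) = (\<Sum>j<j0. real (card (Nab j)))"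
        proof -
          have "(\<Sum>j<j1. h1 j) = (\<Sum>j\<in>{..<j1} \<inter> {j. j < j0}. real (card (Nab j))) + (\<Sum>j\<in>{..<j1} \<inter> - {j. j < j0}. 0)"
            unfolding h1_def by (rule sum.If_cases) simp
          also have "{..<j1} \<inter> {j. j < j0} = {..<j0}" by (auto simp: j1_def)
          finally show ?thesis by simp
        qed
        also have "(\<Sum>j<j1. h2 j) \<le> M / (1 - \<theta>k)"
        proof -
          have "(\<lambda>i. M * \<theta>k ^ i) sums (M * (1 / (1 - \<theta>k)))"
            using \<theta>k by (intro sums_mult geometric_sums) auto
          then have "(\<lambda>i. h2 (i + j0)) sums (M * (1 / (1 - \<theta>k)))" by (simp add: h2_def Nj_def)
          then have hs: "h2 sums (M * (1 / (1 - \<theta>k)))"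
            by (subst (asm) sums_zero_iff_shift) (auto simp: h2_def)
          have "(\<Sum>j<j1. h2 j) \<le> suminf h2"
            by (rule sum_le_suminf[OF sums_summable[OF hs]]) (auto simp: h2_def less_imp_le[OF Nj])
          also have "\<dots> = M / (1 - \<theta>k)" using hs by (simp add: sums_iff)
          finally show ?thesis .
        qed
        finally have "real (card S) \<le> real (\<Sum>j<j0. card (Nab j)) + M / (1 - \<theta>k)" by simp
        also have "M / (1 - \<theta>k) = real n / 2" using \<theta>k by (simp add: M_def field_simps)
        finally have "real (card S) \<le> real n" using j0s by linarith
        then have cS: "card S \<le> n" by simp
        have vS: "\<forall>x\<in>S. snd x \<in> Nab (fst x)" by (auto simp: S_def)
        define u where "u = (\<lambda>j l. if (j, l) \<in> S then 0 else a j l)"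
        have sig: "sigma_n Nab s p1 q1 n a \<le> bnorm Nab s p1 q1 u"
          using sigma_le[OF fS cS vS l1] unfolding u_def .
        define E where "E = 2 powr (real j0 * d)"
        have Epos: "0 < E" by (simp add: E_def)
        define K where "K = (E / M) powr r * 2 powr (-(real j0 * t))"
        have K0: "0 \<le> K" by (simp add: K_def)
        have levu: "lev Nab s p1 u j \<le> (if j < j0 then 0 else K * \<theta> ^ (j - j0))" for j
        proof (cases "j < j0")
          case True
          have "block_norm p1 (Nab j) (u j) = 0" using True by (intro block_norm_zero) (simp add: u_def S_def)
          then show ?thesis using True by (simp add: lev_def)
        next
          case F: False
          have "block_norm p1 (Nab j) (u j) = block_norm p1 (Nab j) (\<lambda>l. if \<tau> j < \<bar>a j l\<bar> then 0 else a j l)"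
            using F by (intro block_norm_cong) (auto simp: u_def S_def)
          also have "\<dots> \<le> \<alpha> j * Nj j powr (- r)" by (rule resid)
          finally have b1: "block_norm p1 (Nab j) (u j) \<le> \<alpha> j * Nj j powr (- r)" .
          define k where "k = j - j0"
          have jk: "real j = real j0 + real k" using F by (simp add: k_def)
          have NjP: "Nj j powr (- r) = M powr (- r) * 2 powr (\<mu> * real k)"
          proof -
            have "Nj j powr (- r) = M powr (- r) * (2 powr (-\<kappa> * real k)) powr (- r)"
              by (simp add: Nj_def powr_mult \<theta>k_def pow2_powr k_def)
            also have "(2 powr (-\<kappa> * real k)) powr (- r) = 2 powr ((\<kappa> * r) * real k)"
              unfolding powr_powr by (simp add: algebra_simps)
            also have "(\<kappa> * r) * real k = \<mu> * real k" using \<kappa>r by simp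
            finally show ?thesis .
          qed
          have EM: "(E / M) powr r = 2 powr (real j0 * d * r) * M powr (- r)"
          proof -
            have "(E / M) powr r = E powr r / M powr r" by (rule powr_divide)
            moreover have "M powr (- r) = 1 / M powr r" by (rule powr_minus_divide)
            moreover have "E powr r = 2 powr (real j0 * d * r)" unfolding E_def by (rule powr_powr)
            ultimately show ?thesis by simp
          qed
          have ex: "2 powr (-(real j * t)) * 2 powr (real j * d * r) * 2 powr (\<mu> * real k)
              = 2 powr (real j0 * d * r) * 2 powr (-(real j0 * t)) * \<theta> ^ k"
          proof -
            have "2 powr (-(real j * t)) * 2 powr (real j * d * r) * 2 powr (\<mu> * real k)
                = 2 powr (-(real j * t) + real j * d * r + \<mu> * real k)" by (simp only: powr_add)
            also have "-(real j * t) + real j * d * r + \<mu> * real k = real j0 * d * r + -(real j0 * t) + (-\<mu>) * real k"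
              unfolding jk by (simp add: \<mu>_def algebra_simps)
            also have "2 powr (real j0 * d * r + -(real j0 * t) + (-\<mu>) * real k)
                = 2 powr (real j0 * d * r) * 2 powr (-(real j0 * t)) * \<theta> ^ k"
              by (simp only: powr_add \<theta>_def pow2_powr)
            finally show ?thesis .
          qed
          have "lev Nab s p1 u j = 2 powr (real j * A1) * block_norm p1 (Nab j) (u j)"
            by (simp add: lev_def A1_def)
          also have "\<dots> \<le> 2 powr (real j * A1) * (\<alpha> j * Nj j powr (- r))"
            using b1 by (intro mult_left_mono) auto
          also have "\<dots> = (2 powr (real j * A1) * 2 powr (-(real j * A0))) * Nj j powr (- r)"
            by (simp add: \<alpha>_def mult_ac)
          also have "\<dots> = (2 powr (-(real j * t)) * 2 powr (real j * d * r) * 2 powr (\<mu> * real k)) * M powr (- r)"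
            unfolding WA NjP by (simp only: mult_ac)
          also have "\<dots> = (2 powr (real j0 * d * r) * 2 powr (-(real j0 * t)) * \<theta> ^ k) * M powr (- r)"
            by (simp only: ex)
          also have "\<dots> = K * \<theta> ^ (j - j0)"
            unfolding K_def EM k_def by (simp only: mult_ac)
          finally show ?thesis using F by simp
        qed
        have "bnorm Nab s p1 q1 u \<le> ereal (K * Gc q1 \<theta>)"
          by (rule bnorm_le_geom[OF p(4) fin K0 \<theta> levu])
        also have "K * Gc q1 \<theta> \<le> c2 * real n powr (- t / real CARD('d))"
        proof -
          have "E / M \<le> 2 * Q1 / (1 - \<theta>k)"
          proof -
            have "E / M \<le> (real n * Q1) / M" using j0E M by (intro divide_right_mono) (auto simp: E_def)
            also have "\<dots> = 2 * Q1 / (1 - \<theta>k)" using n \<theta>k by (simp add: M_def field_simps)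
            finally show ?thesis .
          qed
          then have "(E / M) powr r \<le> (2 * Q1 / (1 - \<theta>k)) powr r"
            using rpos Epos M by (intro powr_mono2) auto
          then have "K \<le> (2 * Q1 / (1 - \<theta>k)) powr r * (Kt * real n powr (- t / d))"
            unfolding K_def using j0k by (intro mult_mono) auto
          then have "K * Gc q1 \<theta> \<le> (2 * Q1 / (1 - \<theta>k)) powr r * (Kt * real n powr (- t / d)) * Gc q1 \<theta>"
            using G1 by (intro mult_right_mono) auto
          then show ?thesis by (simp add: c2_def d_def mult_ac)
        qed
        finally show "sigma_n Nab s p1 q1 n a \<le> ereal (c2 * real n powr (- t / real CARD('d)))"
          using sig by (rule order_trans[rotated]) simp
      qed
    qed
  qed
qed


theorem theorem7:
  fixes Nab :: "nat \<Rightarrow> ('d::finite) idx set"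
    and p0 p1 q0 q1 :: ereal and s t :: real
  assumes "admissible_nabla Nab"
    and "0 < p0" and "0 < p1" and "0 < q0" and "0 < q1"
    and "t > 0"
    and "t > real CARD('d) * max 0 (inv_exp p0 - inv_exp p1)"
  shows "\<exists>c1 c2. 0 < c1 \<and> 0 < c2 \<and> (\<forall>n::nat. n \<ge> 1 \<longrightarrow>
     ereal (c1 * real n powr (- t / real CARD('d)))
       \<le> (SUP a \<in> {a. on_nabla Nab a \<and> bnorm Nab (s + t) p0 q0 a \<le> 1}.
             sigma_n Nab s p1 q1 n a)
   \<and> (SUP a \<in> {a. on_nabla Nab a \<and> bnorm Nab (s + t) p0 q0 a \<le> 1}.
             sigma_n Nab s p1 q1 n a)
       \<le> ereal (c2 * real n powr (- t / real CARD('d))))"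
proof -
  obtain c1 where c1: "0 < c1" "\<forall>n::nat. n \<ge> 1 \<longrightarrow> ereal (c1 * real n powr (- t / real CARD('d)))
       \<le> (SUP a \<in> {a. on_nabla Nab a \<and> bnorm Nab (s + t) p0 q0 a \<le> 1}. sigma_n Nab s p1 q1 n a)"
    using lower_bound[OF assms(1-6), of s] by blast
  obtain c2 where c2: "0 < c2" "\<forall>n::nat. n \<ge> 1 \<longrightarrow>
     (SUP a \<in> {a. on_nabla Nab a \<and> bnorm Nab (s + t) p0 q0 a \<le> 1}. sigma_n Nab s p1 q1 n a)
       \<le> ereal (c2 * real n powr (- t / real CARD('d)))"
    using upper_bound[OF assms, of s] by blast
  show ?thesis using c1 c2 by blast
qed

end
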